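(* Let $G$ be a unit square graph with realization $f$, let $\mathcal{P}$ be a clique-partition of $V(G)$, and let $\simeq$ be the equivalence relation on $V(G)\cup\mathcal{M}(G)$ whose classes form the coarsest partition of $V(G)\cup\mathcal{M}(G)$ that is stable with respect to $G^*_{\mathcal{M}}$ and refines $\mathcal{P}\cup\{\mathcal{M}(G)\}$. If $C,D$ are distinct maximal cliques with $C\simeq D$, then $z_f(C)_i\cap z_f(D)_i=\emptyset$ for $i=1,2$.
   Context: A realization of $G$ is $f\colon V(G)\to\mathbb{R}^2$ with $vw\in E(G)$ iff $\|f(v)-f(w)\|_\infty\le1$ for distinct $v,w$; a unit square graph is a graph with a realization. A clique-partition is a partition of $V(G)$ all of whose parts are cliques. $\mathcal{M}(G)$ is the set of maximal cliques. $G^*_{\mathcal{M}}$ is the graph on $V(G)\sqcup\mathcal{M}(G)$ with edge set $E(G)\cup\{vC \mid C\in\mathcal{M}(G), v\in C\}$. A partition $\mathcal{Q}$ of the vertex set of a graph $H$ is stable if for all $X,Y\in\mathcal{Q}$ and $v,w\in X$, $|N_H(v)\cap Y|=|N_H(w)\cap Y|$. The center of a maximal clique $C$ is $z_f(C)=\{p\in\mathbb{R}^2\mid\forall v\in C:\|f(v)-p\|_\infty\le\tfrac12\}$, and $z_f(C)_i=\{p_i\mid p\in z_f(C)\}$ is its projection to the $i$-th coordinate. *)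

theory Defs
  imports Complex_Main "HOL-Library.Disjoint_Sets"
begin

definition graph :: "'a set \<Rightarrow> ('a \<Rightarrow> 'a \<Rightarrow> bool) \<Rightarrow> bool" where
  "graph V E \<longleftrightarrow> finite V \<and> (\<forall>v w. E v w \<longrightarrow> v \<in> V \<and> w \<in> V \<and> v \<noteq> w \<and> E w v)"

definition linf_dist :: "real \<times> real \<Rightarrow> real \<times> real \<Rightarrow> real" where
  "linf_dist p q = max \<bar>fst p - fst q\<bar> \<bar>snd p - snd q\<bar>"

definition realization :: "'a set \<Rightarrow> ('a \<Rightarrow> 'a \<Rightarrow> bool) \<Rightarrow> ('a \<Rightarrow> real \<times> real) \<Rightarrow> bool" where
  "realization V E f \<longleftrightarrow>
     (\<forall>v\<in>V. \<forall>w\<in>V. v \<noteq> w \<longrightarrow> (E v w \<longleftrightarrow> linf_dist (f v) (f w) \<le> 1))"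

definition unit_square_graph :: "'a set \<Rightarrow> ('a \<Rightarrow> 'a \<Rightarrow> bool) \<Rightarrow> bool" where
  "unit_square_graph V E \<longleftrightarrow> graph V E \<and> (\<exists>f. realization V E f)"

definition clique :: "'a set \<Rightarrow> ('a \<Rightarrow> 'a \<Rightarrow> bool) \<Rightarrow> 'a set \<Rightarrow> bool" where
  "clique V E C \<longleftrightarrow> C \<subseteq> V \<and> (\<forall>v\<in>C. \<forall>w\<in>C. v \<noteq> w \<longrightarrow> E v w)"

definition max_cliques :: "'a set \<Rightarrow> ('a \<Rightarrow> 'a \<Rightarrow> bool) \<Rightarrow> 'a set set" where
  "max_cliques V E = {C. clique V E C \<and> (\<forall>D. clique V E D \<and> C \<subseteq> D \<longrightarrow> D = C)}"

definition clique_partition :: "'a set \<Rightarrow> ('a \<Rightarrow> 'a \<Rightarrow> bool) \<Rightarrow> 'a set set \<Rightarrow> bool" where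
  "clique_partition V E P \<longleftrightarrow> partition_on V P \<and> (\<forall>X\<in>P. clique V E X)"

text \<open>The graph G*_M on the disjoint union V + \<M>(G) (vertices Inl v, cliques Inr C).\<close>
definition star_vertices :: "'a set \<Rightarrow> ('a \<Rightarrow> 'a \<Rightarrow> bool) \<Rightarrow> ('a + 'a set) set" where
  "star_vertices V E = Inl ` V \<union> Inr ` max_cliques V E"

fun star_edge :: "'a set \<Rightarrow> ('a \<Rightarrow> 'a \<Rightarrow> bool) \<Rightarrow> ('a + 'a set) \<Rightarrow> ('a + 'a set) \<Rightarrow> bool" where
  "star_edge V E (Inl v) (Inl w) = E v w"
| "star_edge V E (Inl v) (Inr C) = (C \<in> max_cliques V E \<and> v \<in> C)"
| "star_edge V E (Inr C) (Inl v) = (C \<in> max_cliques V E \<and> v \<in> C)"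
| "star_edge V E (Inr C) (Inr D) = False"

definition stable :: "('b \<Rightarrow> 'b \<Rightarrow> bool) \<Rightarrow> 'b set set \<Rightarrow> bool" where
  "stable EH Q \<longleftrightarrow> (\<forall>X\<in>Q. \<forall>Y\<in>Q. \<forall>v\<in>X. \<forall>w\<in>X.
       card {u\<in>Y. EH v u} = card {u\<in>Y. EH w u})"

definition refines :: "'b set set \<Rightarrow> 'b set set \<Rightarrow> bool" where
  "refines Q R \<longleftrightarrow> (\<forall>X\<in>Q. \<exists>Y\<in>R. X \<subseteq> Y)"

definition base_partition :: "'a set \<Rightarrow> ('a \<Rightarrow> 'a \<Rightarrow> bool) \<Rightarrow> 'a set set \<Rightarrow> ('a + 'a set) set set" where
  "base_partition V E P = (\<lambda>X. Inl ` X) ` P \<union> {Inr ` max_cliques V E}"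

definition coarsest_stable_refinement ::
  "'b set \<Rightarrow> ('b \<Rightarrow> 'b \<Rightarrow> bool) \<Rightarrow> 'b set set \<Rightarrow> 'b set set \<Rightarrow> bool" where
  "coarsest_stable_refinement W EH R Q \<longleftrightarrow>
     partition_on W Q \<and> stable EH Q \<and> refines Q R \<and>
     (\<forall>Q'. partition_on W Q' \<and> stable EH Q' \<and> refines Q' R \<longrightarrow> refines Q' Q)"

definition center :: "('a \<Rightarrow> real \<times> real) \<Rightarrow> 'a set \<Rightarrow> (real \<times> real) set" where
  "center f C = {p. \<forall>v\<in>C. linf_dist (f v) p \<le> 1/2}"

end

theory Submission
  imports Defs
begin

lemma core:
  fixes a :: "'a \<Rightarrow> real"
  assumes adj: "\<And>v w. v \<in> C \<union> D \<Longrightarrow> w \<in> C \<union> D \<Longrightarrow> v \<noteq> w \<Longrightarrow> (E v w \<longleftrightarrow> \<bar>a v - a w\<bar> \<le> 1)"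
    and cC: "\<And>v w. v \<in> C \<Longrightarrow> w \<in> C \<Longrightarrow> v \<noteq> w \<Longrightarrow> E v w"
    and cD: "\<And>v w. v \<in> D \<Longrightarrow> w \<in> D \<Longrightarrow> v \<noteq> w \<Longrightarrow> E v w"
    and u: "u \<in> C" "u \<notin> D"
    and umin: "\<And>w. w \<in> (C - D) \<union> (D - C) \<Longrightarrow> a u \<le> a w"
    and d: "d \<in> D" "d \<notin> C" "E u d"
    and c: "c \<in> C" "c \<noteq> d" "\<not> E c d"
  shows False
proof -
  have ud: "u \<noteq> d" using u d by auto
  have h1: "\<bar>a u - a d\<bar> \<le> 1" using adj[of u d] u d ud by auto
  have h2: "a u \<le> a d" using umin[of d] d by auto
  have cnD: "c \<notin> D" using cD[of c d] c d by auto
  have h3: "a u \<le> a c" using umin[of c] c cnD by auto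
  have h4: "\<bar>a c - a d\<bar> > 1" using adj[of c d] c d by auto
  show False
  proof (cases "a c > a d + 1")
    case True
    then have "c \<noteq> u" using h2 by auto
    then have "E u c" using cC u c by auto
    then have "\<bar>a u - a c\<bar> \<le> 1" using adj[of u c] u c \<open>c \<noteq> u\<close> by auto
    then show False using True h2 by auto
  next
    case False
    then show False using h4 h3 h1 by auto
  qed
qed

lemma maxcl_clique:
  assumes "C \<in> max_cliques V E" "v \<in> C" "w \<in> C" "v \<noteq> w"
  shows "E v w"
  using assms by (auto simp: max_cliques_def clique_def)

lemma maxcl_sub:
  assumes "C \<in> max_cliques V E" shows "C \<subseteq> V"
  using assms by (auto simp: max_cliques_def clique_def)

lemma maxcl_ext:
  assumes g: "graph V E" and C: "C \<in> max_cliques V E" and "d \<in> V" "d \<notin> C"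
  shows "\<exists>c\<in>C. c \<noteq> d \<and> \<not> E c d"
proof (rule ccontr)
  assume "\<not> ?thesis"
  then have all: "\<forall>c\<in>C. c \<noteq> d \<longrightarrow> E c d" by auto
  have cl: "clique V E C" using C unfolding max_cliques_def by auto
  have sym: "\<And>x y. E x y \<Longrightarrow> E y x" using g unfolding graph_def by auto
  have "clique V E (insert d C)"
    unfolding clique_def
  proof (intro conjI ballI impI)
    show "insert d C \<subseteq> V" using cl assms(3) unfolding clique_def by auto
  next
    fix v w assume vw: "v \<in> insert d C" "w \<in> insert d C" "v \<noteq> w"
    show "E v w"
    proof (cases "v = d")
      case True then show ?thesis using vw all sym by auto
    next
      case False
      then have "v \<in> C" using vw by auto
      then show ?thesis using vw all cl unfolding clique_def by auto
    qed
  qed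
  then have "insert d C = C" using C unfolding max_cliques_def by blast
  then show False using assms(4) by auto
qed

lemma counting:
  assumes g: "graph V E"
    and cp: "clique_partition V E P"
    and Q: "coarsest_stable_refinement (star_vertices V E) (star_edge V E) (base_partition V E P) Q"
    and C: "C \<in> max_cliques V E" and D: "D \<in> max_cliques V E"
    and K: "\<exists>X\<in>Q. Inr C \<in> X \<and> Inr D \<in> X"
    and u: "u \<in> C" "u \<notin> D"
  shows "\<exists>d\<in>D. d \<notin> C \<and> E u d"
proof -
  have uV: "u \<in> V" using maxcl_sub[OF C] u by auto
  have part: "partition_on (star_vertices V E) Q" and st: "stable (star_edge V E) Q"
    and rf: "refines Q (base_partition V E P)"
    using Q unfolding coarsest_stable_refinement_def by auto
  have "Inl u \<in> star_vertices V E" using uV unfolding star_vertices_def by auto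
  then obtain X where X: "X \<in> Q" "Inl u \<in> X" using part unfolding partition_on_def by auto
  have Xsub: "X \<subseteq> star_vertices V E" using part X unfolding partition_on_def by auto
  obtain Y where Y: "Y \<in> base_partition V E P" "X \<subseteq> Y" using rf X unfolding refines_def by auto
  obtain Xp where Xp: "Xp \<in> P" "X \<subseteq> Inl ` Xp"
    using Y X unfolding base_partition_def by auto
  have Xpcl: "clique V E Xp" using cp Xp unfolding clique_partition_def by auto
  define X' where "X' = {v. Inl v \<in> X}"
  have XX': "X = Inl ` X'" using Xp unfolding X'_def by auto
  have X'sub: "X' \<subseteq> Xp" using Xp unfolding X'_def by auto
  have finV: "finite V" using g unfolding graph_def by auto
  have finX': "finite X'" proof -
    have "Xp \<subseteq> V" using Xpcl unfolding clique_def by auto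
    then have "X' \<subseteq> V" using X'sub by auto
    then show ?thesis using finV by (rule finite_subset)
  qed
  obtain K where Kq: "K \<in> Q" "Inr C \<in> K" "Inr D \<in> K" using K by auto
  have eqc: "card {w\<in>X. star_edge V E (Inr C) w} = card {w\<in>X. star_edge V E (Inr D) w}"
  proof -
    have "\<forall>X\<in>Q. \<forall>Y\<in>Q. \<forall>v\<in>X. \<forall>w\<in>X. card {u\<in>Y. star_edge V E v u} = card {u\<in>Y. star_edge V E w u}"
      using st unfolding stable_def .
    then have "\<forall>v\<in>K. \<forall>w\<in>K. card {u\<in>X. star_edge V E v u} = card {u\<in>X. star_edge V E w u}"
      using Kq(1) X(1) by blast
    then show ?thesis using Kq(2,3) by blast
  qed
  have sC: "{w\<in>X. star_edge V E (Inr C) w} = Inl ` (X' \<inter> C)" using C XX' by auto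
  have sD: "{w\<in>X. star_edge V E (Inr D) w} = Inl ` (X' \<inter> D)" using D XX' by auto
  have cardeq: "card (X' \<inter> C) = card (X' \<inter> D)"
    using eqc sC sD by (simp add: card_image)
  have uX': "u \<in> X'" using X unfolding X'_def by auto
  show ?thesis
  proof (rule ccontr)
    assume nt: "\<not> (\<exists>d\<in>D. d \<notin> C \<and> E u d)"
    have "X' \<inter> D \<subseteq> X' \<inter> C"
    proof
      fix d assume d: "d \<in> X' \<inter> D"
      have "d \<noteq> u" using d u by auto
      moreover have "u \<in> Xp" "d \<in> Xp" using X'sub d uX' by auto
      ultimately have "E u d" using Xpcl unfolding clique_def by auto
      then show "d \<in> X' \<inter> C" using d nt by auto
    qed
    moreover have "finite (X' \<inter> C)" using finX' by auto
    ultimately have "X' \<inter> D = X' \<inter> C" using cardeq card_subset_eq by metis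
    then show False using u uX' by auto
  qed
qed

lemma no_overlap:
  fixes g h :: "real \<times> real \<Rightarrow> real"
  assumes lin: "\<And>p q. linf_dist p q = max \<bar>g p - g q\<bar> \<bar>h p - h q\<bar>"
    and us: "unit_square_graph V E"
    and re: "realization V E f"
    and cp: "clique_partition V E P"
    and Q: "coarsest_stable_refinement (star_vertices V E) (star_edge V E) (base_partition V E P) Q"
    and C: "C \<in> max_cliques V E" and D: "D \<in> max_cliques V E" and CD: "C \<noteq> D"
    and K: "\<exists>X\<in>Q. Inr C \<in> X \<and> Inr D \<in> X"
  shows "g ` center f C \<inter> g ` center f D = {}"
proof (rule ccontr)
  assume "g ` center f C \<inter> g ` center f D \<noteq> {}"
  then obtain p q where pq: "p \<in> center f C" "q \<in> center f D" "g p = g q" by blast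
  have gr: "graph V E" using us unfolding unit_square_graph_def by auto
  have CV: "C \<subseteq> V" "D \<subseteq> V" using maxcl_sub C D by auto
  have close: "\<bar>g (f v) - g p\<bar> \<le> 1/2" if "v \<in> C \<union> D" for v
  proof (cases "v \<in> C")
    case True
    then have "linf_dist (f v) p \<le> 1/2" using pq unfolding center_def by auto
    then have "max \<bar>g (f v) - g p\<bar> \<bar>h (f v) - h p\<bar> \<le> 1/2" using lin[of "f v" p] by simp
    then show ?thesis by (simp only: max.bounded_iff)
  next
    case False
    then have "linf_dist (f v) q \<le> 1/2" using pq that unfolding center_def by auto
    then have "max \<bar>g (f v) - g q\<bar> \<bar>h (f v) - h q\<bar> \<le> 1/2" using lin[of "f v" q] by simp
    then show ?thesis using pq(3) by (simp only: max.bounded_iff)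
  qed
  define a where "a = (\<lambda>v. h (f v))"
  have adj: "E v w \<longleftrightarrow> \<bar>a v - a w\<bar> \<le> 1"
    if "v \<in> C \<union> D" "w \<in> C \<union> D" "v \<noteq> w" for v w
  proof -
    have "\<bar>g (f v) - g (f w)\<bar> \<le> 1" using close[OF that(1)] close[OF that(2)] by (simp only: abs_le_iff) linarith
    moreover have "E v w \<longleftrightarrow> linf_dist (f v) (f w) \<le> 1" using re that CV
      unfolding realization_def by blast
    ultimately show ?thesis unfolding a_def lin by auto
  qed
  have finV: "finite V" using gr unfolding graph_def by auto
  define S where "S = (C - D) \<union> (D - C)"
  have finS: "finite S" unfolding S_def using finite_subset[OF CV(1) finV] finite_subset[OF CV(2) finV] by auto
  have Sne: "S \<noteq> {}" using CD unfolding S_def by auto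
  obtain u where uS: "u \<in> S" and umin: "\<And>w. w \<in> S \<Longrightarrow> a u \<le> a w"
  proof -
    have fa: "finite (a ` S)" using finS by auto
    have na: "a ` S \<noteq> {}" using Sne by auto
    have "Min (a ` S) \<in> a ` S" using Min_in[OF fa na] .
    then obtain u where "u \<in> S" "a u = Min (a ` S)" by auto
    moreover have "\<And>w. w \<in> S \<Longrightarrow> Min (a ` S) \<le> a w" using Min_le[OF fa] by auto
    ultimately show ?thesis using that by auto
  qed
  show False
  proof (cases "u \<in> C")
    case True
    then have uD: "u \<notin> D" using uS unfolding S_def by auto
    obtain d where d: "d \<in> D" "d \<notin> C" "E u d" using counting[OF gr cp Q C D K True uD] by auto
    obtain c where c: "c \<in> C" "c \<noteq> d" "\<not> E c d" using maxcl_ext[OF gr C _ d(2)] d CV by auto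
    show False
      by (rule core[of C D E a u d c, OF adj maxcl_clique[OF C] maxcl_clique[OF D] True uD _ d c])
        (use umin in \<open>auto simp: S_def\<close>)
  next
    case False
    then have uD: "u \<in> D" using uS unfolding S_def by auto
    have K': "\<exists>X\<in>Q. Inr D \<in> X \<and> Inr C \<in> X" using K by auto
    obtain d where d: "d \<in> C" "d \<notin> D" "E u d" using counting[OF gr cp Q D C K' uD False] by auto
    obtain c where c: "c \<in> D" "c \<noteq> d" "\<not> E c d" using maxcl_ext[OF gr D _ d(2)] d CV by auto
    show False
      by (rule core[of D C E a u d c, OF _ maxcl_clique[OF D] maxcl_clique[OF C] uD False _ d c])
        (use umin adj in \<open>auto simp: S_def\<close>)
  qed
qed

theorem mainTheorem12:
  fixes V :: "'a set" and E :: "'a \<Rightarrow> 'a \<Rightarrow> bool" and f :: "'a \<Rightarrow> real \<times> real"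
    and P :: "'a set set" and Q :: "('a + 'a set) set set" and C D :: "'a set"
  assumes "unit_square_graph V E"
    and "realization V E f"
    and "clique_partition V E P"
    and "coarsest_stable_refinement (star_vertices V E) (star_edge V E) (base_partition V E P) Q"
    and "C \<in> max_cliques V E" and "D \<in> max_cliques V E" and "C \<noteq> D"
    and "\<exists>X\<in>Q. Inr C \<in> X \<and> Inr D \<in> X"
  shows "fst ` center f C \<inter> fst ` center f D = {} \<and> snd ` center f C \<inter> snd ` center f D = {}"
proof
  show "fst ` center f C \<inter> fst ` center f D = {}"
    by (rule no_overlap[where h=snd, OF _ assms]) (simp add: linf_dist_def)
  show "snd ` center f C \<inter> snd ` center f D = {}"
    by (rule no_overlap[where h=fst, OF _ assms]) (simp add: linf_dist_def max.commute)
qed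

end
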